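(* For every priority profile $\succ=(\succ_s)_{s\in S}$ in which every $\succ_s$ is a partial order on $I$, there exists $\succ'\in\mathcal{E}(\succ)$ such that $f^{\succ'}\subseteq f^{\succ}$.
   Context: A partial order on $I$ is an asymmetric and transitive relation; a total order is a partial order that is also negatively transitive and complete. School choice setup: $I$ is a finite set of students with $|I|\ge 3$, $S$ a finite set of schools. Each student $i$ has a total order $P_i$ on $S\cup\{\emptyset\}$; $sR_is'$ means $sP_is'$ or $s=s'$. Each school $s$ has capacity $q_s\in\mathbb{Z}_{++}$ and an asymmetric priority relation $\succ_s$ on $I$. A matching $\mu$ assigns each $i$ to $\mu(i)\in S\cup\{\emptyset\}$, $\mu(s)=\{i:\mu(i)=s\}$, $|\mu(s)|\le q_s$. $\mu$ is stable for $\succ$ if it is individually rational ($\mu(i)R_i\emptyset$ for all $i$), non-wasteful ($sP_i\mu(i)$ implies $|\mu(s)|=q_s$) and fair (no $s$, $j\in\mu(s)$, $i\notin\mu(s)$ with $sR_i\mu(i)$ and $(i,j)\in\succ_s$). $\mu$ is Pareto dominated by $\mu'$ if $\mu'(i)R_i\mu(i)$ for all $i$ and $\mu'(i)P_i\mu(i)$ for some $i$. An SOSM for $\succ$ is a stable matching for $\succ$ not Pareto dominated by any stable matching for $\succ$; $f^\succ$ denotes the set of SOSMs for $\succ$. An extension of $\succ_s$ is a total order on $I$ containing $\succ_s$; $\mathcal{E}(\succ)$ is the set of profiles $(\succ'_s)_{s\in S}$ with each $\succ'_s$ an extension of $\succ_s$. *)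

theory Defs
  imports Main
begin

text \<open>Schools have type 's, students type 'i; the outside option (unassigned) is None.\<close>

definition strict_partial_order_on :: "'a set \<Rightarrow> ('a \<times> 'a) set \<Rightarrow> bool" where
  "strict_partial_order_on A r \<longleftrightarrow> r \<subseteq> A \<times> A \<and>
     (\<forall>x y. (x, y) \<in> r \<longrightarrow> (y, x) \<notin> r) \<and>
     (\<forall>x y z. (x, y) \<in> r \<longrightarrow> (y, z) \<in> r \<longrightarrow> (x, z) \<in> r)"

definition strict_total_order_on :: "'a set \<Rightarrow> ('a \<times> 'a) set \<Rightarrow> bool" where
  "strict_total_order_on A r \<longleftrightarrow> strict_partial_order_on A r \<and>
     (\<forall>x\<in>A. \<forall>y\<in>A. \<forall>z\<in>A. (x, z) \<in> r \<longrightarrow> (x, y) \<in> r \<or> (y, z) \<in> r) \<and>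
     (\<forall>x\<in>A. \<forall>y\<in>A. x \<noteq> y \<longrightarrow> (x, y) \<in> r \<or> (y, x) \<in> r)"

definition weakpref :: "('s option \<times> 's option) set \<Rightarrow> 's option \<Rightarrow> 's option \<Rightarrow> bool" where
  "weakpref Pi x y \<longleftrightarrow> (x, y) \<in> Pi \<or> x = y"

definition is_matching :: "'i set \<Rightarrow> 's set \<Rightarrow> ('s \<Rightarrow> nat) \<Rightarrow> ('i \<Rightarrow> 's option) \<Rightarrow> bool" where
  "is_matching I S q \<mu> \<longleftrightarrow>
     (\<forall>i\<in>I. \<mu> i = None \<or> the (\<mu> i) \<in> S) \<and>
     (\<forall>i. i \<notin> I \<longrightarrow> \<mu> i = None) \<and>
     (\<forall>s\<in>S. card {i\<in>I. \<mu> i = Some s} \<le> q s)"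

definition stable ::
  "'i set \<Rightarrow> 's set \<Rightarrow> ('i \<Rightarrow> ('s option \<times> 's option) set) \<Rightarrow> ('s \<Rightarrow> nat)
    \<Rightarrow> ('s \<Rightarrow> ('i \<times> 'i) set) \<Rightarrow> ('i \<Rightarrow> 's option) \<Rightarrow> bool" where
  "stable I S P q pri \<mu> \<longleftrightarrow> is_matching I S q \<mu> \<and>
     (\<forall>i\<in>I. weakpref (P i) (\<mu> i) None) \<and>
     (\<forall>i\<in>I. \<forall>s\<in>S. (Some s, \<mu> i) \<in> P i \<longrightarrow> card {j\<in>I. \<mu> j = Some s} = q s) \<and>
     \<not> (\<exists>s\<in>S. \<exists>j\<in>I. \<exists>i\<in>I. \<mu> j = Some s \<and> \<mu> i \<noteq> Some s \<and>
           weakpref (P i) (Some s) (\<mu> i) \<and> (i, j) \<in> pri s)"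

definition pareto_dominates ::
  "'i set \<Rightarrow> ('i \<Rightarrow> ('s option \<times> 's option) set) \<Rightarrow> ('i \<Rightarrow> 's option) \<Rightarrow> ('i \<Rightarrow> 's option) \<Rightarrow> bool" where
  "pareto_dominates I P \<mu>' \<mu> \<longleftrightarrow>
     (\<forall>i\<in>I. weakpref (P i) (\<mu>' i) (\<mu> i)) \<and> (\<exists>i\<in>I. (\<mu>' i, \<mu> i) \<in> P i)"

text \<open>f^pri: the set of stable matchings not Pareto dominated by any stable matching.\<close>
definition SOSM ::
  "'i set \<Rightarrow> 's set \<Rightarrow> ('i \<Rightarrow> ('s option \<times> 's option) set) \<Rightarrow> ('s \<Rightarrow> nat)
    \<Rightarrow> ('s \<Rightarrow> ('i \<times> 'i) set) \<Rightarrow> ('i \<Rightarrow> 's option) set" where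
  "SOSM I S P q pri = {\<mu>. stable I S P q pri \<mu> \<and>
      \<not> (\<exists>\<mu>'. stable I S P q pri \<mu>' \<and> pareto_dominates I P \<mu>' \<mu>)}"

text \<open>\<E>(pri): profiles where each school's relation is a total order on I extending pri s.\<close>
definition extensions :: "'i set \<Rightarrow> 's set \<Rightarrow> ('s \<Rightarrow> ('i \<times> 'i) set) \<Rightarrow> ('s \<Rightarrow> ('i \<times> 'i) set) set" where
  "extensions I S pri = {pri'. \<forall>s\<in>S. strict_total_order_on I (pri' s) \<and> pri s \<subseteq> pri' s}"

end

theory Submission
  imports Defs
begin

lemma finite_linear_ext:
  assumes fI: "finite I" and sub: "R \<subseteq> I \<times> I" and tr: "trans R" and irr: "\<forall>x. (x,x) \<notin> R"
  shows "\<exists>r. strict_total_order_on I r \<and> R \<subseteq> r"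
proof -
  obtain g n where g: "g ` I = {i::nat. i < n}" "inj_on g I"
    using finite_imp_inj_to_nat_seg[OF fI] by blast
  define h where "h x = card {y\<in>I. (y,x)\<in>R}" for x
  define key where "key x = h x * n + g x" for x
  define r where "r = {(x,y). x\<in>I \<and> y\<in>I \<and> key x < key y}"
  have gn: "x\<in>I \<Longrightarrow> g x < n" for x using g by auto
  have hlt: "h x < h y" if xy: "(x,y)\<in>R" for x y
  proof -
    have "{z\<in>I. (z,x)\<in>R} \<subset> {z\<in>I. (z,y)\<in>R}"
      using xy sub tr irr by (auto dest: transD)
    then show ?thesis unfolding h_def
      by (intro psubset_card_mono) (auto intro: finite_subset[OF _ fI])
  qed
  have keylt: "key x < key y" if xy: "(x,y)\<in>R" for x y
  proof -
    have xI: "x \<in> I" "y \<in> I" using xy sub by auto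
    have "Suc (h x) \<le> h y" using hlt[OF xy] by simp
    then have "Suc (h x) * n \<le> h y * n" by (rule mult_le_mono1)
    moreover have "key x < Suc (h x) * n" unfolding key_def using gn[OF xI(1)] by simp
    ultimately show ?thesis unfolding key_def by linarith
  qed
  have keyinj: "x = y" if "x\<in>I" "y\<in>I" "key x = key y" for x y
  proof -
    have "key x mod n = g x" "key y mod n = g y" unfolding key_def using gn that by auto
    then have "g x = g y" using that by simp
    then show ?thesis using g(2) that by (auto dest: inj_onD)
  qed
  have "strict_total_order_on I r"
    unfolding strict_total_order_on_def strict_partial_order_on_def
  proof (intro conjI)
    show "r \<subseteq> I \<times> I" unfolding r_def by auto
    show "\<forall>x y. (x, y) \<in> r \<longrightarrow> (y, x) \<notin> r" unfolding r_def by auto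
    show "\<forall>x y z. (x, y) \<in> r \<longrightarrow> (y, z) \<in> r \<longrightarrow> (x, z) \<in> r" unfolding r_def by auto
    show "\<forall>x\<in>I. \<forall>y\<in>I. \<forall>z\<in>I. (x, z) \<in> r \<longrightarrow> (x, y) \<in> r \<or> (y, z) \<in> r"
      unfolding r_def by auto
    show "\<forall>x\<in>I. \<forall>y\<in>I. x \<noteq> y \<longrightarrow> (x, y) \<in> r \<or> (y, x) \<in> r"
    proof (intro ballI impI)
      fix x y assume "x \<in> I" "y \<in> I" "x \<noteq> y"
      then have "key x \<noteq> key y" using keyinj by blast
      then have "key x < key y \<or> key y < key x" by arith
      then show "(x, y) \<in> r \<or> (y, x) \<in> r" unfolding r_def using \<open>x\<in>I\<close> \<open>y\<in>I\<close> by auto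
    qed
  qed
  moreover have "R \<subseteq> r" unfolding r_def using keylt sub by auto
  ultimately show ?thesis by blast
qed

lemma sto_facts:
  assumes "strict_total_order_on A r"
  shows "r \<subseteq> A \<times> A" "(x,y)\<in>r \<Longrightarrow> (y,x)\<notin>r" "(x,x)\<notin>r"
    "(x,y)\<in>r \<Longrightarrow> (y,z)\<in>r \<Longrightarrow> (x,z)\<in>r"
    "x\<in>A \<Longrightarrow> y\<in>A \<Longrightarrow> x\<noteq>y \<Longrightarrow> (x,y)\<in>r \<or> (y,x)\<in>r"
proof -
  have c: "strict_partial_order_on A r \<and> (\<forall>x\<in>A. \<forall>y\<in>A. \<forall>z\<in>A. (x, z) \<in> r \<longrightarrow> (x, y) \<in> r \<or> (y, z) \<in> r) \<and>
     (\<forall>x\<in>A. \<forall>y\<in>A. x \<noteq> y \<longrightarrow> (x, y) \<in> r \<or> (y, x) \<in> r)"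
    using assms unfolding strict_total_order_on_def .
  have sp: "strict_partial_order_on A r" using c by (rule conjunct1)
  have tot: "\<forall>x\<in>A. \<forall>y\<in>A. x \<noteq> y \<longrightarrow> (x, y) \<in> r \<or> (y, x) \<in> r"
    using c by (rule conjunct2[THEN conjunct2])
  have s: "r \<subseteq> A \<times> A" and a: "\<forall>x y. (x, y) \<in> r \<longrightarrow> (y, x) \<notin> r"
    and t: "\<forall>x y z. (x, y) \<in> r \<longrightarrow> (y, z) \<in> r \<longrightarrow> (x, z) \<in> r"
    using sp unfolding strict_partial_order_on_def by blast+
  show "r \<subseteq> A \<times> A" by (rule s)
  show "(x,y)\<in>r \<Longrightarrow> (y,x)\<notin>r" using a by blast
  show "(x,x)\<notin>r" using a by blast
  show "(x,y)\<in>r \<Longrightarrow> (y,z)\<in>r \<Longrightarrow> (x,z)\<in>r" using t by blast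
  show "x\<in>A \<Longrightarrow> y\<in>A \<Longrightarrow> x\<noteq>y \<Longrightarrow> (x,y)\<in>r \<or> (y,x)\<in>r" using tot by blast
qed

lemma spo_facts:
  assumes "strict_partial_order_on A r"
  shows "r \<subseteq> A \<times> A" "(x,y)\<in>r \<Longrightarrow> (y,x)\<notin>r" "(x,x)\<notin>r" "trans r"
proof -
  have s: "r \<subseteq> A \<times> A" and a: "\<forall>x y. (x, y) \<in> r \<longrightarrow> (y, x) \<notin> r"
    and t: "\<forall>x y z. (x, y) \<in> r \<longrightarrow> (y, z) \<in> r \<longrightarrow> (x, z) \<in> r"
    using assms unfolding strict_partial_order_on_def by blast+
  show "r \<subseteq> A \<times> A" by (rule s)
  show "(x,y)\<in>r \<Longrightarrow> (y,x)\<notin>r" using a by blast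
  show "(x,x)\<notin>r" using a by blast
  show "trans r" using t unfolding trans_def by blast
qed

lemma matching_D:
  assumes "is_matching I S q \<mu>" "i \<in> I"
  shows "\<mu> i \<in> insert None (Some ` S)"
  using assms unfolding is_matching_def by (cases "\<mu> i") auto

lemma matching_S:
  assumes "is_matching I S q \<mu>" "\<mu> i = Some s"
  shows "i \<in> I" "s \<in> S"
proof -
  have o: "\<forall>i. i \<notin> I \<longrightarrow> \<mu> i = None" and d: "\<forall>i\<in>I. \<mu> i = None \<or> the (\<mu> i) \<in> S"
    using assms(1) unfolding is_matching_def by simp_all
  show "i \<in> I" using o assms(2) by auto
  then show "s \<in> S" using d assms(2) by fastforce
qed

lemma stable_mono:
  assumes sub: "\<forall>s\<in>S. pri s \<subseteq> pri' s" and st: "stable I S P q pri' \<mu>"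
  shows "stable I S P q pri \<mu>"
proof -
  have c: "is_matching I S q \<mu> \<and>
     (\<forall>i\<in>I. weakpref (P i) (\<mu> i) None) \<and>
     (\<forall>i\<in>I. \<forall>s\<in>S. (Some s, \<mu> i) \<in> P i \<longrightarrow> card {j\<in>I. \<mu> j = Some s} = q s) \<and>
     \<not> (\<exists>s\<in>S. \<exists>j\<in>I. \<exists>i\<in>I. \<mu> j = Some s \<and> \<mu> i \<noteq> Some s \<and>
           weakpref (P i) (Some s) (\<mu> i) \<and> (i, j) \<in> pri' s)"
    using st unfolding stable_def .
  have f: "\<not> (\<exists>s\<in>S. \<exists>j\<in>I. \<exists>i\<in>I. \<mu> j = Some s \<and> \<mu> i \<noteq> Some s \<and>
           weakpref (P i) (Some s) (\<mu> i) \<and> (i, j) \<in> pri s)"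
  proof
    assume "\<exists>s\<in>S. \<exists>j\<in>I. \<exists>i\<in>I. \<mu> j = Some s \<and> \<mu> i \<noteq> Some s \<and>
           weakpref (P i) (Some s) (\<mu> i) \<and> (i, j) \<in> pri s"
    then obtain s j i where "s\<in>S" "j\<in>I" "i\<in>I" "\<mu> j = Some s" "\<mu> i \<noteq> Some s"
      "weakpref (P i) (Some s) (\<mu> i)" "(i, j) \<in> pri s" by blast
    moreover then have "(i,j) \<in> pri' s" using sub by blast
    ultimately show False using c by blast
  qed
  show ?thesis unfolding stable_def using c f by (intro conjI) (elim conjE, assumption)+
qed

lemma stable_D:
  assumes "stable I S P q pri \<mu>"
  shows "is_matching I S q \<mu>" "\<forall>i\<in>I. weakpref (P i) (\<mu> i) None"
   "\<forall>i\<in>I. \<forall>s\<in>S. (Some s, \<mu> i) \<in> P i \<longrightarrow> card {j\<in>I. \<mu> j = Some s} = q s"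
   "\<not> (\<exists>s\<in>S. \<exists>j\<in>I. \<exists>i\<in>I. \<mu> j = Some s \<and> \<mu> i \<noteq> Some s \<and>
           weakpref (P i) (Some s) (\<mu> i) \<and> (i, j) \<in> pri s)"
proof -
  note c = assms[unfolded stable_def]
  show "is_matching I S q \<mu>" using c by (rule conjunct1)
  show "\<forall>i\<in>I. weakpref (P i) (\<mu> i) None" using c by (rule conjunct2[THEN conjunct1])
  show "\<forall>i\<in>I. \<forall>s\<in>S. (Some s, \<mu> i) \<in> P i \<longrightarrow> card {j\<in>I. \<mu> j = Some s} = q s"
    using c by (rule conjunct2[THEN conjunct2, THEN conjunct1])
  show "\<not> (\<exists>s\<in>S. \<exists>j\<in>I. \<exists>i\<in>I. \<mu> j = Some s \<and> \<mu> i \<noteq> Some s \<and>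
           weakpref (P i) (Some s) (\<mu> i) \<and> (i, j) \<in> pri s)"
    using c by (rule conjunct2[THEN conjunct2, THEN conjunct2])
qed

lemma stable_I:
  assumes "is_matching I S q \<mu>" "\<forall>i\<in>I. weakpref (P i) (\<mu> i) None"
   "\<forall>i\<in>I. \<forall>s\<in>S. (Some s, \<mu> i) \<in> P i \<longrightarrow> card {j\<in>I. \<mu> j = Some s} = q s"
   "\<not> (\<exists>s\<in>S. \<exists>j\<in>I. \<exists>i\<in>I. \<mu> j = Some s \<and> \<mu> i \<noteq> Some s \<and>
           weakpref (P i) (Some s) (\<mu> i) \<and> (i, j) \<in> pri s)"
  shows "stable I S P q pri \<mu>"
  unfolding stable_def using assms by (intro conjI)

lemma half:
  assumes Ptot: "\<forall>i\<in>I. strict_total_order_on (insert None (Some ` S)) (P i)"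
    and pritot: "\<forall>s\<in>S. strict_total_order_on I (pri s)"
    and nu: "stable I S P q pri \<nu>" and mu: "stable I S P q pri \<mu>"
    and i: "i \<in> I" "(\<mu> i, \<nu> i) \<in> P i" "\<mu> i = Some s"
  shows "s \<in> S" "card {j\<in>I. \<nu> j = Some s} = q s"
    "\<And>j. j\<in>I \<Longrightarrow> \<nu> j = Some s \<Longrightarrow> \<mu> j \<noteq> Some s \<Longrightarrow> (\<mu> j, \<nu> j) \<in> P j"
proof -
  note nuD = stable_D[OF nu] and muD = stable_D[OF mu]
  show sS: "s \<in> S" using matching_S(2)[OF muD(1) i(3)] .
  have Pi: "strict_total_order_on (insert None (Some ` S)) (P i)" using Ptot i(1) by blast
  have sP: "(Some s, \<nu> i) \<in> P i" using i by simp
  then show "card {j\<in>I. \<nu> j = Some s} = q s" using nuD(3) i(1) sS by blast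
  have ne: "\<nu> i \<noteq> Some s" using sP sto_facts(3)[OF Pi] by metis
  fix j assume j: "j\<in>I" "\<nu> j = Some s" "\<mu> j \<noteq> Some s"
  have Pj: "strict_total_order_on (insert None (Some ` S)) (P j)" using Ptot j(1) by blast
  have pris: "strict_total_order_on I (pri s)" using pritot sS by blast
  have "\<not> (weakpref (P i) (Some s) (\<nu> i) \<and> (i, j) \<in> pri s)"
    using nuD(4) sS j(1,2) i(1) ne by blast
  then have "(i,j) \<notin> pri s" using sP unfolding weakpref_def by blast
  moreover have "i \<noteq> j" using ne j(2) by metis
  ultimately have ji: "(j,i) \<in> pri s" using sto_facts(5)[OF pris i(1) j(1)] by blast
  have "\<not> (weakpref (P j) (Some s) (\<mu> j) \<and> (j, i) \<in> pri s)"
    using muD(4) sS j(1,3) i(1,3) by blast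
  then have "(Some s, \<mu> j) \<notin> P j" using ji unfolding weakpref_def by blast
  moreover have "\<mu> j \<in> insert None (Some ` S)" using matching_D[OF muD(1) j(1)] .
  moreover have "Some s \<in> insert None (Some ` S)" using sS by blast
  ultimately have "(\<mu> j, Some s) \<in> P j" using sto_facts(5)[OF Pj] j(3) by metis
  then show "(\<mu> j, \<nu> j) \<in> P j" using j(2) by simp
qed

lemma join_lemma:
  fixes \<nu> \<mu> :: "'i \<Rightarrow> 's option"
  assumes fI: "finite I" and fS: "finite S"
    and Ptot: "\<forall>i\<in>I. strict_total_order_on (insert None (Some ` S)) (P i)"
    and pritot: "\<forall>s\<in>S. strict_total_order_on I (pri s)"
    and nu: "stable I S P q pri \<nu>" and mu: "stable I S P q pri \<mu>"
    and i0: "i0 \<in> I" "(\<mu> i0, \<nu> i0) \<in> P i0"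
  shows "\<exists>\<eta>. stable I S P q pri \<eta> \<and> pareto_dominates I P \<eta> \<nu>"
proof -
  note nuD = stable_D[OF nu] and muD = stable_D[OF mu]
  define D where "D = insert None (Some ` S)"
  have Pi: "strict_total_order_on D (P i)" if "i \<in> I" for i using Ptot that unfolding D_def by blast
  have Pa: "(y,x) \<notin> P i" if "i \<in> I" "(x,y) \<in> P i" for i x y using sto_facts(2)[OF Pi[OF that(1)] that(2)] .
  have Pirr: "(x,x) \<notin> P i" if "i \<in> I" for i x using sto_facts(3)[OF Pi[OF that(1)]] .
  have Ptr: "(x,z) \<in> P i" if "i \<in> I" "(x,y) \<in> P i" "(y,z) \<in> P i" for i x y z
    using sto_facts(4)[OF Pi[OF that(1)] that(2,3)] .
  have Ptt: "(x,y) \<in> P i \<or> (y,x) \<in> P i" if "i \<in> I" "x \<in> D" "y \<in> D" "x \<noteq> y" for i x y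
    using sto_facts(5)[OF Pi[OF that(1)] that(2,3,4)] .
  have muD': "\<mu> i \<in> D" if "i \<in> I" for i using matching_D[OF muD(1) that] unfolding D_def .
  have nuD': "\<nu> i \<in> D" if "i \<in> I" for i using matching_D[OF nuD(1) that] unfolding D_def .
  define A where "A = {i\<in>I. (\<mu> i, \<nu> i) \<in> P i}"
  define B where "B = {i\<in>I. (\<nu> i, \<mu> i) \<in> P i}"
  define \<eta> where "\<eta> i = (if i \<in> A then \<mu> i else \<nu> i)" for i
  define Ms where "Ms s = {i\<in>I. \<mu> i = Some s}" for s
  define Ns where "Ns s = {i\<in>I. \<nu> i = Some s}" for s
  define X where "X = {s\<in>S. \<exists>i\<in>A. \<mu> i = Some s}"
  have fA: "finite A" unfolding A_def using fI by simp
  have fB: "finite B" unfolding B_def using fI by simp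
  have fMs: "finite (Ms s)" for s unfolding Ms_def using fI by simp
  have fNs: "finite (Ns s)" for s unfolding Ns_def using fI by simp
  have fX: "finite X" unfolding X_def using fS by simp
  have AB: "A \<inter> B = {}" unfolding A_def B_def using Pa by blast
  have diff: "i \<in> A \<or> i \<in> B" if "i \<in> I" "\<mu> i \<noteq> \<nu> i" for i
    using Ptt[OF that(1) muD'[OF that(1)] nuD'[OF that(1)] that(2)] that(1) unfolding A_def B_def by blast
  have Ane: "\<mu> i \<noteq> \<nu> i" if "i \<in> A" for i using that Pirr unfolding A_def by force
  have Bne: "\<mu> i \<noteq> \<nu> i" if "i \<in> B" for i using that Pirr unfolding B_def by force
  have AI: "A \<subseteq> I" unfolding A_def by blast
  have BI: "B \<subseteq> I" unfolding B_def by blast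
  have F1: "\<exists>s. \<mu> i = Some s" if "i \<in> A" for i
  proof (cases "\<mu> i")
    case None
    have iI: "i \<in> I" and p: "(None, \<nu> i) \<in> P i" using that None unfolding A_def by auto
    have "weakpref (P i) (\<nu> i) None" using nuD(2) iI by blast
    then have False using p Pa[OF iI] Pirr[OF iI] unfolding weakpref_def by metis
    then show ?thesis ..
  qed simp
  have XS: "X \<subseteq> S" unfolding X_def by blast
  have Xfull: "card (Ns s) = q s" and XNA: "Ns s - Ms s \<subseteq> A" if sX: "s \<in> X" for s
  proof -
    obtain i where i: "i \<in> A" "\<mu> i = Some s" using sX unfolding X_def by blast
    have iI: "i \<in> I" and ip: "(\<mu> i, \<nu> i) \<in> P i" using i unfolding A_def by auto
    note h = half[OF Ptot pritot nu mu iI ip i(2)]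
    show "card (Ns s) = q s" unfolding Ns_def using h(2) .
    show "Ns s - Ms s \<subseteq> A" unfolding Ns_def Ms_def A_def using h(3) by blast
  qed
  have XB: "Ns s \<inter> B = {}" if sX: "s \<in> X" for s
  proof (rule ccontr)
    assume "Ns s \<inter> B \<noteq> {}"
    then obtain k where k: "k \<in> B" "\<nu> k = Some s" unfolding Ns_def by blast
    have kI: "k \<in> I" and kp: "(\<nu> k, \<mu> k) \<in> P k" using k unfolding B_def by auto
    note h = half[OF Ptot pritot mu nu kI kp k(2)]
    obtain i where i: "i \<in> A" "\<mu> i = Some s" using sX unfolding X_def by blast
    have iI: "i \<in> I" and ip: "(\<mu> i, \<nu> i) \<in> P i" using i unfolding A_def by auto
    have "\<nu> i \<noteq> Some s" using Ane[OF i(1)] i(2) by simp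
    then have "(\<nu> i, \<mu> i) \<in> P i" using h(3)[OF iI i(2)] by blast
    then show False using Pa[OF iI ip] by blast
  qed
  have ineq: "card (Ns s \<inter> A) \<ge> card (Ms s \<inter> A) + card (Ms s \<inter> B)" if "s \<in> X" for s
  proof -
    have sS: "s \<in> S" using that XS by blast
    have cap: "card (Ms s) \<le> q s" using muD(1) sS unfolding is_matching_def Ms_def by blast
    have e1: "Ns s - Ms s = Ns s \<inter> A"
    proof
      show "Ns s - Ms s \<subseteq> Ns s \<inter> A" using XNA[OF that] by blast
      show "Ns s \<inter> A \<subseteq> Ns s - Ms s" unfolding Ns_def Ms_def using Ane by fastforce
    qed
    have e2: "Ms s - Ns s = (Ms s \<inter> A) \<union> (Ms s \<inter> B)"
    proof
      show "Ms s - Ns s \<subseteq> (Ms s \<inter> A) \<union> (Ms s \<inter> B)" unfolding Ns_def Ms_def using diff by (auto; metis)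
      show "(Ms s \<inter> A) \<union> (Ms s \<inter> B) \<subseteq> Ms s - Ns s" unfolding Ns_def Ms_def using Ane Bne by fastforce
    qed
    have c2: "card (Ms s - Ns s) = card (Ms s \<inter> A) + card (Ms s \<inter> B)"
      unfolding e2 by (rule card_Un_disjoint) (use fMs AB in auto)
    have n1: "card (Ns s) = card (Ns s \<inter> Ms s) + card (Ns s - Ms s)" using card_Int_Diff[OF fNs] .
    have m1: "card (Ms s) = card (Ms s \<inter> Ns s) + card (Ms s - Ns s)" using card_Int_Diff[OF fMs] .
    have n2: "card (Ns s) = card (Ns s \<inter> Ms s) + card (Ns s \<inter> A)" using n1 unfolding e1 .
    have "Ns s \<inter> Ms s = Ms s \<inter> Ns s" by blast
    then have eqc: "card (Ns s \<inter> Ms s) = card (Ms s \<inter> Ns s)" by (rule arg_cong)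
    show ?thesis using Xfull[OF that] cap c2 n2 m1 eqc by linarith
  qed
  have disjN: "\<forall>s\<in>X. \<forall>t\<in>X. s \<noteq> t \<longrightarrow> (Ns s \<inter> A) \<inter> (Ns t \<inter> A) = {}" unfolding Ns_def by auto
  have disjM: "\<forall>s\<in>X. \<forall>t\<in>X. s \<noteq> t \<longrightarrow> (Ms s \<inter> A) \<inter> (Ms t \<inter> A) = {}" unfolding Ms_def by auto
  have UM: "(\<Union>s\<in>X. Ms s \<inter> A) = A"
  proof
    show "(\<Union>s\<in>X. Ms s \<inter> A) \<subseteq> A" by blast
    show "A \<subseteq> (\<Union>s\<in>X. Ms s \<inter> A)"
    proof
      fix i assume iA: "i \<in> A"
      obtain s where s: "\<mu> i = Some s" using F1[OF iA] by blast
      have "s \<in> S" using matching_S(2)[OF muD(1) s] .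
      then have "s \<in> X" unfolding X_def using iA s by blast
      then show "i \<in> (\<Union>s\<in>X. Ms s \<inter> A)" unfolding Ms_def using iA s AI by blast
    qed
  qed
  have UNsub: "(\<Union>s\<in>X. Ns s \<inter> A) \<subseteq> A" by blast
  have sumN: "(\<Sum>s\<in>X. card (Ns s \<inter> A)) = card (\<Union>s\<in>X. Ns s \<inter> A)"
    using card_UN_disjoint[OF fX _ disjN] fNs by simp
  have sumM: "(\<Sum>s\<in>X. card (Ms s \<inter> A)) = card A"
    using card_UN_disjoint[OF fX _ disjM] fMs UM by simp
  have sN_le: "(\<Sum>s\<in>X. card (Ns s \<inter> A)) \<le> card A"
    unfolding sumN using card_mono[OF fA UNsub] .
  have "(\<Sum>s\<in>X. card (Ms s \<inter> A) + card (Ms s \<inter> B)) \<le> (\<Sum>s\<in>X. card (Ns s \<inter> A))"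
    using ineq by (intro sum_mono) blast
  then have tot: "card A + (\<Sum>s\<in>X. card (Ms s \<inter> B)) \<le> (\<Sum>s\<in>X. card (Ns s \<inter> A))"
    unfolding sum.distrib sumM .
  have "(\<Sum>s\<in>X. card (Ms s \<inter> B)) = 0" using tot sN_le by linarith
  then have XMB: "Ms s \<inter> B = {}" if "s \<in> X" for s
    using that fX fMs by simp
  have "card (\<Union>s\<in>X. Ns s \<inter> A) = card A" using tot sN_le sumN by linarith
  then have UN: "(\<Union>s\<in>X. Ns s \<inter> A) = A" using card_subset_eq[OF fA UNsub] by blast
  have AX: "\<exists>s\<in>X. \<nu> i = Some s" if "i \<in> A" for i
  proof -
    have "i \<in> (\<Union>s\<in>X. Ns s \<inter> A)" using that UN by argo
    then show ?thesis unfolding Ns_def by blast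
  qed
  have EX: "{i\<in>I. \<eta> i = Some s} = Ms s" if "s \<in> X" for s
  proof
    show "{i\<in>I. \<eta> i = Some s} \<subseteq> Ms s"
    proof
      fix i assume "i \<in> {i\<in>I. \<eta> i = Some s}"
      then have iI: "i \<in> I" and e: "\<eta> i = Some s" by auto
      show "i \<in> Ms s"
      proof (cases "i \<in> A")
        case True then show ?thesis using iI e unfolding \<eta>_def Ms_def by simp
      next
        case False
        then have "i \<in> Ns s" using iI e unfolding \<eta>_def Ns_def by simp
        then show ?thesis using XNA[OF that] False by blast
      qed
    qed
    show "Ms s \<subseteq> {i\<in>I. \<eta> i = Some s}"
    proof
      fix i assume iM: "i \<in> Ms s"
      then have iI: "i \<in> I" and m: "\<mu> i = Some s" unfolding Ms_def by auto
      show "i \<in> {i\<in>I. \<eta> i = Some s}"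
      proof (cases "i \<in> A")
        case True then show ?thesis using iI m unfolding \<eta>_def by simp
      next
        case False
        have "i \<notin> B" using XMB[OF that] iM by blast
        then have "\<mu> i = \<nu> i" using diff[OF iI] False by blast
        then show ?thesis using iI m False unfolding \<eta>_def by simp
      qed
    qed
  qed
  have ENX: "{i\<in>I. \<eta> i = Some s} = Ns s" if "s \<in> S" "s \<notin> X" for s
  proof
    show "{i\<in>I. \<eta> i = Some s} \<subseteq> Ns s"
    proof
      fix i assume "i \<in> {i\<in>I. \<eta> i = Some s}"
      then have iI: "i \<in> I" and e: "\<eta> i = Some s" by auto
      have "i \<notin> A"
      proof
        assume iA: "i \<in> A"
        then have "\<mu> i = Some s" using e unfolding \<eta>_def by simp
        then have "s \<in> X" unfolding X_def using iA that(1) by blast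
        then show False using that(2) by blast
      qed
      then show "i \<in> Ns s" using iI e unfolding \<eta>_def Ns_def by simp
    qed
    show "Ns s \<subseteq> {i\<in>I. \<eta> i = Some s}"
    proof
      fix i assume iN: "i \<in> Ns s"
      then have iI: "i \<in> I" and n: "\<nu> i = Some s" unfolding Ns_def by auto
      have "i \<notin> A"
      proof
        assume "i \<in> A"
        then obtain t where "t \<in> X" "\<nu> i = Some t" using AX by blast
        then show False using n that(2) by simp
      qed
      then show "i \<in> {i\<in>I. \<eta> i = Some s}" using iI n unfolding \<eta>_def by simp
    qed
  qed
  have Eset: "{i\<in>I. \<eta> i = Some s} = Ms s \<or> {i\<in>I. \<eta> i = Some s} = Ns s" if "s \<in> S" for s
    using EX ENX that by blast
  have wpM: "weakpref (P i) (\<eta> i) (\<mu> i)" if "i \<in> I" for i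
  proof (cases "i \<in> A")
    case True then show ?thesis unfolding \<eta>_def weakpref_def by simp
  next
    case False
    then have "(\<mu> i, \<nu> i) \<notin> P i" using that unfolding A_def by blast
    then have "(\<nu> i, \<mu> i) \<in> P i \<or> \<nu> i = \<mu> i" using Ptt[OF that nuD'[OF that] muD'[OF that]] by blast
    then show ?thesis using False unfolding \<eta>_def weakpref_def by simp
  qed
  have wpN: "weakpref (P i) (\<eta> i) (\<nu> i)" if "i \<in> I" for i
    using that unfolding \<eta>_def weakpref_def A_def by simp
  have wptr: "(x, z) \<in> P i" if "i \<in> I" "(x,y) \<in> P i" "weakpref (P i) y z" for i x y z
    using that Ptr[OF that(1) that(2)] unfolding weakpref_def by blast
  have m: "is_matching I S q \<eta>"
    unfolding is_matching_def
  proof (intro conjI ballI allI impI)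
    fix i assume iI: "i \<in> I"
    show "\<eta> i = None \<or> the (\<eta> i) \<in> S"
      using muD(1) nuD(1) iI unfolding is_matching_def \<eta>_def by (cases "i \<in> A") auto
  next
    fix i assume "i \<notin> I"
    then show "\<eta> i = None" using nuD(1) AI unfolding is_matching_def \<eta>_def by auto
  next
    fix s assume sS: "s \<in> S"
    have "card (Ms s) \<le> q s" "card (Ns s) \<le> q s"
      using muD(1) nuD(1) sS unfolding is_matching_def Ms_def Ns_def by blast+
    then show "card {i\<in>I. \<eta> i = Some s} \<le> q s" using Eset[OF sS] by auto
  qed
  have ir: "\<forall>i\<in>I. weakpref (P i) (\<eta> i) None"
    using muD(2) nuD(2) unfolding \<eta>_def by simp
  have nw: "\<forall>i\<in>I. \<forall>s\<in>S. (Some s, \<eta> i) \<in> P i \<longrightarrow> card {j\<in>I. \<eta> j = Some s} = q s"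
  proof (intro ballI impI)
    fix i s assume iI: "i \<in> I" and sS: "s \<in> S" and p: "(Some s, \<eta> i) \<in> P i"
    have "(Some s, \<mu> i) \<in> P i" using wptr[OF iI p wpM[OF iI]] .
    then have "card (Ms s) = q s" using muD(3) iI sS unfolding Ms_def by blast
    moreover have "(Some s, \<nu> i) \<in> P i" using wptr[OF iI p wpN[OF iI]] .
    then have "card (Ns s) = q s" using nuD(3) iI sS unfolding Ns_def by blast
    ultimately show "card {j\<in>I. \<eta> j = Some s} = q s" using Eset[OF sS] by auto
  qed
  have fair: "\<not> (\<exists>s\<in>S. \<exists>j\<in>I. \<exists>i\<in>I. \<eta> j = Some s \<and> \<eta> i \<noteq> Some s \<and>
           weakpref (P i) (Some s) (\<eta> i) \<and> (i, j) \<in> pri s)"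
  proof
    assume "\<exists>s\<in>S. \<exists>j\<in>I. \<exists>i\<in>I. \<eta> j = Some s \<and> \<eta> i \<noteq> Some s \<and>
           weakpref (P i) (Some s) (\<eta> i) \<and> (i, j) \<in> pri s"
    then obtain s j i where sS: "s \<in> S" and jI: "j \<in> I" and iI: "i \<in> I" and ej: "\<eta> j = Some s"
      and ei: "\<eta> i \<noteq> Some s" and w: "weakpref (P i) (Some s) (\<eta> i)" and ij: "(i, j) \<in> pri s"
      by blast
    have sp: "(Some s, \<eta> i) \<in> P i" using w ei unfolding weakpref_def by metis
    show False
    proof (cases "s \<in> X")
      case True
      note E = EX[OF True]
      have "j \<in> Ms s" using jI ej E by blast
      moreover have "i \<notin> Ms s" using iI ei E by blast
      moreover have "(Some s, \<mu> i) \<in> P i" using wptr[OF iI sp wpM[OF iI]] .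
      ultimately show False using muD(4) sS jI iI ij unfolding Ms_def weakpref_def by blast
    next
      case False
      note E = ENX[OF sS False]
      have "j \<in> Ns s" using jI ej E by blast
      moreover have "i \<notin> Ns s" using iI ei E by blast
      moreover have "(Some s, \<nu> i) \<in> P i" using wptr[OF iI sp wpN[OF iI]] .
      ultimately show False using nuD(4) sS jI iI ij unfolding Ns_def weakpref_def by blast
    qed
  qed
  have st: "stable I S P q pri \<eta>" by (rule stable_I[OF m ir nw fair])
  have i0A: "i0 \<in> A" unfolding A_def using i0 by blast
  have "pareto_dominates I P \<eta> \<nu>"
    unfolding pareto_dominates_def
  proof (intro conjI)
    show "\<forall>i\<in>I. weakpref (P i) (\<eta> i) (\<nu> i)" using wpN by blast
    show "\<exists>i\<in>I. (\<eta> i, \<nu> i) \<in> P i" using i0 i0A unfolding \<eta>_def by auto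
  qed
  then show ?thesis using st by blast
qed

lemma acyc_ext:
  assumes spo: "strict_partial_order_on I r" and AdMN: "Ad \<subseteq> M \<times> E" and AdI: "Ad \<subseteq> I \<times> I"
    and ME: "M \<inter> E = {}" and noback: "\<forall>e\<in>E. \<forall>m\<in>M. (e,m) \<notin> r"
  shows "(r \<union> Ad)\<^sup>+ \<subseteq> I \<times> I" "trans ((r \<union> Ad)\<^sup>+)" "\<forall>x. (x,x) \<notin> (r \<union> Ad)\<^sup>+"
proof -
  note rf = spo_facts[OF spo]
  have rtr: "(x,z) \<in> r" if "(x,y) \<in> r" "(y,z) \<in> r" for x y z
    using rf(4) that unfolding trans_def by blast
  show "(r \<union> Ad)\<^sup>+ \<subseteq> I \<times> I"
    by (rule trancl_subset_Sigma) (use rf(1) AdI in blast)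
  show "trans ((r \<union> Ad)\<^sup>+)" by (rule trans_trancl)
  define Inv where "Inv = r \<union> {(x,z). \<exists>a b. (x = a \<or> (x,a) \<in> r) \<and> (a,b) \<in> Ad \<and> (b = z \<or> (b,z) \<in> r)}"
  have AdD: "a \<in> M" "b \<in> E" if "(a,b) \<in> Ad" for a b using that AdMN by blast+
  have sub: "(r \<union> Ad)\<^sup>+ \<subseteq> Inv"
  proof
    fix p assume "p \<in> (r \<union> Ad)\<^sup>+"
    then obtain x z where p: "p = (x,z)" and xz: "(x,z) \<in> (r \<union> Ad)\<^sup>+" by (cases p) auto
    have "(x,z) \<in> Inv" using xz
    proof (induction rule: trancl_induct)
      case (base y)
      then show ?case unfolding Inv_def by blast
    next
      case (step y z)
      show ?case
      proof (cases "(x,y) \<in> r")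
        case xy: True
        show ?thesis
        proof (cases "(y,z) \<in> r")
          case True then show ?thesis using xy rtr unfolding Inv_def by blast
        next
          case False then have "(y,z) \<in> Ad" using step(2) by blast
          then show ?thesis using xy unfolding Inv_def by blast
        qed
      next
        case False
        then obtain a b where ab: "x = a \<or> (x,a) \<in> r" "(a,b) \<in> Ad" "b = y \<or> (b,y) \<in> r"
          using step(3) unfolding Inv_def by blast
        show ?thesis
        proof (cases "(y,z) \<in> r")
          case True
          then have "b = z \<or> (b,z) \<in> r" using ab(3) rtr by blast
          then show ?thesis using ab(1,2) unfolding Inv_def by blast
        next
          case False then have yz: "(y,z) \<in> Ad" using step(2) by blast
          have "y \<in> M" using AdD(1)[OF yz] .
          moreover have "b \<in> E" using AdD(2)[OF ab(2)] .
          ultimately have "b \<noteq> y" "(b,y) \<notin> r" using ME noback by blast+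
          then show ?thesis using ab(3) by blast
        qed
      qed
    qed
    then show "p \<in> Inv" using p by simp
  qed
  show "\<forall>x. (x,x) \<notin> (r \<union> Ad)\<^sup>+"
  proof (intro allI notI)
    fix x assume "(x,x) \<in> (r \<union> Ad)\<^sup>+"
    then have xx: "(x,x) \<in> Inv" using sub by blast
    show False
    proof (cases "(x,x) \<in> r")
      case True then show False using rf(3) by blast
    next
      case False
      then obtain a b where ab: "x = a \<or> (x,a) \<in> r" "(a,b) \<in> Ad" "b = x \<or> (b,x) \<in> r"
        using xx unfolding Inv_def by blast
      have "b = a \<or> (b,a) \<in> r" using ab(1,3) rtr by blast
      moreover have "a \<in> M" "b \<in> E" using AdD[OF ab(2)] by auto
      ultimately show False using ME noback by blast
    qed
  qed
qed

lemma sosm_exists: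
  fixes I :: "'i set" and S :: "'s set"
  assumes fS: "finite S" and fI: "finite I"
    and Ptot: "\<forall>i\<in>I. strict_total_order_on (insert None (Some ` S)) (P i)"
    and st0: "stable I S P q pri \<mu>0"
  shows "\<exists>\<mu>. \<mu> \<in> SOSM I S P q pri"
proof -
  define D where "D = insert None (Some ` S)"
  have fD: "finite D" unfolding D_def using fS by simp
  have Pi: "strict_total_order_on D (P i)" if "i \<in> I" for i using Ptot that unfolding D_def by blast
  define rk where "rk i x = card {y\<in>D. (y,x) \<in> P i}" for i x
  define m where "m \<mu> = (\<Sum>i\<in>I. rk i (\<mu> i))" for \<mu> :: "'i \<Rightarrow> 's option"
  have rklt: "rk i x < rk i y" if "i \<in> I" "(x,y) \<in> P i" for i x y
  proof -
    note f = sto_facts[OF Pi[OF that(1)]]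
    have xD: "x \<in> D" using f(1) that(2) by blast
    have "{z\<in>D. (z,x) \<in> P i} \<subset> {z\<in>D. (z,y) \<in> P i}"
    proof
      show "{z\<in>D. (z,x) \<in> P i} \<subseteq> {z\<in>D. (z,y) \<in> P i}" using f(4) that(2) by blast
      show "{z\<in>D. (z,x) \<in> P i} \<noteq> {z\<in>D. (z,y) \<in> P i}" using xD that(2) f(3) by blast
    qed
    then show ?thesis unfolding rk_def by (rule psubset_card_mono[rotated]) (use fD in simp)
  qed
  obtain \<mu> where mu: "stable I S P q pri \<mu>" and mmin: "\<forall>\<mu>'. stable I S P q pri \<mu>' \<longrightarrow> m \<mu> \<le> m \<mu>'"
    using ex_has_least_nat[of "stable I S P q pri" \<mu>0 m] st0 by blast
  have "\<not> (\<exists>\<mu>'. stable I S P q pri \<mu>' \<and> pareto_dominates I P \<mu>' \<mu>)"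
  proof
    assume "\<exists>\<mu>'. stable I S P q pri \<mu>' \<and> pareto_dominates I P \<mu>' \<mu>"
    then obtain \<mu>' where st': "stable I S P q pri \<mu>'" and w: "\<forall>i\<in>I. weakpref (P i) (\<mu>' i) (\<mu> i)"
      and ex: "\<exists>i\<in>I. (\<mu>' i, \<mu> i) \<in> P i" unfolding pareto_dominates_def by blast
    have "m \<mu>' < m \<mu>" unfolding m_def
    proof (rule sum_strict_mono_ex1[OF fI])
      show "\<forall>x\<in>I. rk x (\<mu>' x) \<le> rk x (\<mu> x)"
      proof
        fix i assume iI: "i \<in> I"
        show "rk i (\<mu>' i) \<le> rk i (\<mu> i)"
          using w iI rklt[OF iI] unfolding weakpref_def by (metis less_imp_le order_refl)
      qed
      show "\<exists>a\<in>I. rk a (\<mu>' a) < rk a (\<mu> a)" using ex rklt by blast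
    qed
    then show False using mmin st' by (meson leD)
  qed
  then show ?thesis using mu unfolding SOSM_def by blast
qed

theorem corollary3:
  fixes I :: "'i set" and S :: "'s set"
    and P :: "'i \<Rightarrow> ('s option \<times> 's option) set"
    and q :: "'s \<Rightarrow> nat"
    and pri :: "'s \<Rightarrow> ('i \<times> 'i) set"
  assumes "finite I" and "card I \<ge> 3" and "finite S"
    and "\<forall>i\<in>I. strict_total_order_on (insert None (Some ` S)) (P i)"
    and "\<forall>s\<in>S. q s > 0"
    and "\<forall>s\<in>S. strict_partial_order_on I (pri s)"
  shows "\<exists>pri' \<in> extensions I S pri. SOSM I S P q pri' \<subseteq> SOSM I S P q pri"
proof -
  note fI = assms(1) and fS = assms(3) and Ptot = assms(4) and spo = assms(6)
  show ?thesis
  proof (cases "\<exists>\<mu>0. stable I S P q pri \<mu>0")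
    case False
    define pri' where "pri' s = (SOME r. strict_total_order_on I r \<and> pri s \<subseteq> r)" for s
    have p': "strict_total_order_on I (pri' s) \<and> pri s \<subseteq> pri' s" if sS: "s \<in> S" for s
    proof -
      note f = spo_facts[OF bspec[OF spo sS]]
      have "\<exists>r. strict_total_order_on I r \<and> pri s \<subseteq> r"
        by (rule finite_linear_ext[OF fI f(1) f(4)]) (use f(3) in blast)
      then show ?thesis unfolding pri'_def by (rule someI_ex)
    qed
    have ext: "pri' \<in> extensions I S pri" unfolding extensions_def mem_Collect_eq
      using p' by (intro ballI) (elim meta_allE, erule meta_mp)
    have sub0: "\<forall>s\<in>S. pri s \<subseteq> pri' s" using p' by (intro ballI) (elim meta_allE, erule meta_mp[THEN conjunct2])
    have "SOSM I S P q pri' = {}"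
    proof (rule ccontr)
      assume "SOSM I S P q pri' \<noteq> {}"
      then obtain \<nu> where "\<nu> \<in> SOSM I S P q pri'" by blast
      then have "stable I S P q pri' \<nu>" unfolding SOSM_def by simp
      then have "stable I S P q pri \<nu>" by (rule stable_mono[OF sub0])
      then show False using False by blast
    qed
    then show ?thesis using ext by blast
  next
    case True
    then obtain \<mu>0 where "stable I S P q pri \<mu>0" by blast
    then obtain \<mu> where muS: "\<mu> \<in> SOSM I S P q pri" using sosm_exists[OF fS fI Ptot] by blast
    then have c: "stable I S P q pri \<mu> \<and> \<not> (\<exists>\<mu>'. stable I S P q pri \<mu>' \<and> pareto_dominates I P \<mu>' \<mu>)"
      unfolding SOSM_def by (rule CollectD)
    have mu: "stable I S P q pri \<mu>" using c by (rule conjunct1)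
    have mund: "\<not> (\<exists>\<mu>'. stable I S P q pri \<mu>' \<and> pareto_dominates I P \<mu>' \<mu>)" using c by (rule conjunct2)
    note muD = stable_D[OF mu]
    define M where "M s = {j\<in>I. \<mu> j = Some s}" for s
    define E where "E s = {i\<in>I. \<mu> i \<noteq> Some s \<and> (Some s, \<mu> i) \<in> P i}" for s
    define Ad where "Ad s = {(j,i). j \<in> M s \<and> i \<in> E s}" for s
    define R where "R s = (pri s \<union> Ad s)\<^sup>+" for s
    have Rf: "R s \<subseteq> I \<times> I \<and> trans (R s) \<and> (\<forall>x. (x,x) \<notin> R s)" if sS: "s \<in> S" for s
    proof -
      have nb: "\<forall>e\<in>E s. \<forall>m\<in>M s. (e,m) \<notin> pri s"
      proof (intro ballI notI)
        fix e m assume e: "e \<in> E s" and m: "m \<in> M s" and em: "(e,m) \<in> pri s"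
        have "weakpref (P e) (Some s) (\<mu> e)" using e unfolding E_def weakpref_def by blast
        then show False using muD(4) sS e m em unfolding E_def M_def by blast
      qed
      have a1: "Ad s \<subseteq> M s \<times> E s" unfolding Ad_def by blast
      have a2: "Ad s \<subseteq> I \<times> I" unfolding Ad_def M_def E_def by blast
      have a3: "M s \<inter> E s = {}" unfolding M_def E_def by blast
      note a = acyc_ext[OF bspec[OF spo sS] a1 a2 a3 nb]
      show ?thesis unfolding R_def using a by blast
    qed
    define pri' where "pri' s = (SOME r. strict_total_order_on I r \<and> R s \<subseteq> r)" for s
    have p': "strict_total_order_on I (pri' s) \<and> R s \<subseteq> pri' s" if sS: "s \<in> S" for s
    proof -
      have f: "R s \<subseteq> I \<times> I" "trans (R s)" "\<forall>x. (x,x) \<notin> R s" using Rf[OF sS] by blast+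
      have "\<exists>r. strict_total_order_on I r \<and> R s \<subseteq> r"
        by (rule finite_linear_ext[OF fI f])
      then show ?thesis unfolding pri'_def by (rule someI_ex)
    qed
    have priR: "pri s \<subseteq> R s" for s unfolding R_def by (auto intro: r_into_trancl)
    have AdR: "Ad s \<subseteq> R s" for s unfolding R_def by (auto intro: r_into_trancl)
    have sub': "\<forall>s\<in>S. pri s \<subseteq> pri' s"
    proof
      fix s assume sS: "s \<in> S"
      show "pri s \<subseteq> pri' s" using priR[of s] conjunct2[OF p'[OF sS]] by (rule subset_trans)
    qed
    have pritot: "\<forall>s\<in>S. strict_total_order_on I (pri' s)"
    proof
      fix s assume sS: "s \<in> S"
      show "strict_total_order_on I (pri' s)" using conjunct1[OF p'[OF sS]] .
    qed
    have ext: "pri' \<in> extensions I S pri" unfolding extensions_def mem_Collect_eq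
      using pritot sub' by blast
    have fair': "\<not> (\<exists>s\<in>S. \<exists>j\<in>I. \<exists>i\<in>I. \<mu> j = Some s \<and> \<mu> i \<noteq> Some s \<and>
           weakpref (P i) (Some s) (\<mu> i) \<and> (i, j) \<in> pri' s)"
    proof
      assume "\<exists>s\<in>S. \<exists>j\<in>I. \<exists>i\<in>I. \<mu> j = Some s \<and> \<mu> i \<noteq> Some s \<and>
           weakpref (P i) (Some s) (\<mu> i) \<and> (i, j) \<in> pri' s"
      then obtain s j i where sS: "s \<in> S" and jI: "j \<in> I" and iI: "i \<in> I" and mj: "\<mu> j = Some s"
        and mi: "\<mu> i \<noteq> Some s" and w: "weakpref (P i) (Some s) (\<mu> i)" and ij: "(i, j) \<in> pri' s"
        by blast
      have "(Some s, \<mu> i) \<in> P i" using w mi unfolding weakpref_def by metis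
      then have "(j,i) \<in> Ad s" unfolding Ad_def M_def E_def using jI iI mj mi by blast
      then have "(j,i) \<in> pri' s" using AdR p'[OF sS] by blast
      then show False using ij sto_facts(2)[of I "pri' s" j i] p'[OF sS] by blast
    qed
    have mu': "stable I S P q pri' \<mu>" by (rule stable_I[OF muD(1) muD(2) muD(3) fair'])
    have "SOSM I S P q pri' \<subseteq> SOSM I S P q pri"
    proof
      fix \<nu> assume nuS: "\<nu> \<in> SOSM I S P q pri'"
      then have c: "stable I S P q pri' \<nu> \<and> \<not> (\<exists>\<mu>'. stable I S P q pri' \<mu>' \<and> pareto_dominates I P \<mu>' \<nu>)"
        unfolding SOSM_def by (rule CollectD)
      have nu': "stable I S P q pri' \<nu>" using c by (rule conjunct1)
      have nund: "\<not> (\<exists>\<mu>'. stable I S P q pri' \<mu>' \<and> pareto_dominates I P \<mu>' \<nu>)" using c by (rule conjunct2)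
      have nu: "stable I S P q pri \<nu>" using stable_mono[OF sub' nu'] .
      note nuD = stable_D[OF nu]
      have np: "(\<mu> i, \<nu> i) \<notin> P i" if iI: "i \<in> I" for i
        using join_lemma[OF fI fS Ptot pritot nu' mu' iI] nund by blast
      have eq: "\<nu> i = \<mu> i" if iI: "i \<in> I" for i
      proof (rule ccontr)
        assume ne: "\<nu> i \<noteq> \<mu> i"
        have Pi: "strict_total_order_on (insert None (Some ` S)) (P i)" using Ptot iI by blast
        have "(\<nu> i, \<mu> i) \<in> P i"
          using sto_facts(5)[OF Pi matching_D[OF nuD(1) iI] matching_D[OF muD(1) iI] ne] np[OF iI] by blast
        moreover have "\<forall>k\<in>I. weakpref (P k) (\<nu> k) (\<mu> k)"
        proof
          fix k assume kI: "k \<in> I"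
          have Pk: "strict_total_order_on (insert None (Some ` S)) (P k)" using Ptot kI by blast
          show "weakpref (P k) (\<nu> k) (\<mu> k)"
            using sto_facts(5)[OF Pk matching_D[OF nuD(1) kI] matching_D[OF muD(1) kI]] np[OF kI]
            unfolding weakpref_def by blast
        qed
        ultimately have "pareto_dominates I P \<nu> \<mu>" unfolding pareto_dominates_def using iI by blast
        then show False using mund nu by blast
      qed
      have "\<nu> = \<mu>"
      proof
        fix i show "\<nu> i = \<mu> i"
        proof (cases "i \<in> I")
          case True then show ?thesis using eq by blast
        next
          case False then show ?thesis using nuD(1) muD(1) unfolding is_matching_def by simp
        qed
      qed
      then show "\<nu> \<in> SOSM I S P q pri" using muS by simp
    qed
    then show ?thesis using ext by blast
  qed
qed

end
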